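(* Let $W$ be a finite set of possible worlds, let $G_1=(2^W,\gg_1)$ and $G_2$ be belief algebras on $W$, let $\bullet$ be an operator on belief algebras on $W$ satisfying (RA1)–(RA6), and let $G_*=(2^W,\gg_* )=\operatorname{Com}(G_1)\bullet\operatorname{Com}(G_2)$. Then $G_1\bullet G_2=\operatorname{Gen}((G_1\cap G_* )\cup G_2)$, and $$G_1\cap G_*=\{(U,V)\mid U\gg_1 V \text{ and } I_*(U)\gg_* I_*(V)\},$$ where $I_*$ denotes the support with respect to the backbone of $G_*$.
   Context: $W$ is a finite nonempty set; $R_W=\{(U,V)\mid U,V\subseteq W,\ U\cap V=\varnothing\}$. A belief algebra on $W$ is a pair $(2^W,\gg)$, $\gg$ a binary relation on $2^W$, such that for all $U,V,U_1,V_1,U_2,V_2\subseteq W$: (A0) $\gg\subseteq R_W$; (A1) $U\gg\varnothing$ iff $U\neq\varnothing$; (A2) $U\gg V$ implies not $V\gg U$; (A3) if $U_1\supseteq U$, $U\gg V$, $V\supseteq V_1$, $U_1\cap V_1=\varnothing$ then $U_1\gg V_1$; (A4) if $U=U_1\cup V_1=U_2\cup V_2$, $U_1\gg V_1$, $U_2\gg V_2$ then $U_1\cap U_2\gg V_1\cup V_2$. Belief algebras are identified with their relations as sets of pairs ($\subseteq,\cup,\cap$ accordingly). $\operatorname{Gen}(\Omega)$ for $\Omega\subseteq R_W$ is the smallest subset of $R_W$ that contains $\Omega$, contains $(U,\varnothing)$ for each nonempty $U$, and is closed under: $(U,V)$ in it, $U\subseteq U_1$, $V_1\subseteq V$, $U_1\cap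 V_1=\varnothing$ imply $(U_1,V_1)$ in it; $U_1\cup V_1=U_2\cup V_2$ with $(U_1,V_1),(U_2,V_2)$ in it imply $(U_1\cap U_2,V_1\cup V_2)$ in it. For a total preorder $\preceq$ on $W$ ($\omega\prec\omega'$ iff $\omega\preceq\omega'$ and not $\omega'\preceq\omega$), the relation $U\gg V$ iff $U\cap V=\varnothing$ and some $\omega_1\in U$ has $\omega_1\prec\omega_2$ for all $\omega_2\in V$ is a belief algebra; these are the complete belief algebras (CBAs). Every belief algebra has a unique backbone: nonempty pairwise disjoint $U_1,\dots,U_n$ with union $W$, $U_i\gg U_{i+1}$ for $i<n$, and any two disjoint nonempty subsets of a single $U_i$ incomparable under $\gg$. The support $I(V)$ of nonempty $V\subseteq W$ is $U_i$ for the least $i$ with $V\cap U_i\neq\varnothing$. $\operatorname{Com}(G)$ is the unique CBA containing $G$ with the same backbone as $G$ (the CBA of the total preorder ranking worlds by the index of their backbone block). $G\leq G'$ means $G,G'$ have the same backbone and $G\subseteq G'$. Postulates (for all belief algebras $G_1=(2^W,\gg_1)$, $G_2$, $G_1'$, $G_2'$): (RA1) $G_2\subseteq G_1\bullet G_2$. (RA2) $G_1\bullet G_2=\operatorname{Gen}(\Omega)$ for some $\Omega\subseteq G_1\cup G_2$. (RA3) If $G_1,G_2$ are CBAs then so is $G_1\bullet G_2$. (RA4) If $G_1,G_2$ are CBAs and $I_2(\{\omega\})=I_2(\{\omega'\})$ (support w.r.t. the backbone of $G_2$), then $(\{\omega\},\{\omega'\})\in G_1\bullet G_2$ iff $\{\omega\}\gg_1\{\omega'\}$.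 (RA5) If $G_1\leq G_1'$ and $G_2\leq G_2'$ then $G_1\bullet G_2\subseteq G_1'\bullet G_2'$. (RA6) If $\Omega\subseteq G_1\cup G_2$, $\operatorname{Gen}(\Omega)\subseteq\operatorname{Com}(G_1)\bullet\operatorname{Com}(G_2)$ and $G_1\bullet G_2\subseteq\operatorname{Gen}(\Omega)$, then $G_1\bullet G_2=\operatorname{Gen}(\Omega)$. *)

theory Defs
  imports Main
begin

type_synonym 'a balg = "('a set \<times> 'a set) set"

definition RW :: "'a set \<Rightarrow> 'a balg" where
  "RW W = {(U, V). U \<subseteq> W \<and> V \<subseteq> W \<and> U \<inter> V = {}}"

definition belief_algebra :: "'a set \<Rightarrow> 'a balg \<Rightarrow> bool" where
  "belief_algebra W G \<longleftrightarrow>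
     G \<subseteq> RW W \<and>
     (\<forall>U. U \<subseteq> W \<longrightarrow> ((U, {}) \<in> G \<longleftrightarrow> U \<noteq> {})) \<and>
     (\<forall>U V. (U, V) \<in> G \<longrightarrow> (V, U) \<notin> G) \<and>
     (\<forall>U V U1 V1. U1 \<subseteq> W \<and> U \<subseteq> U1 \<and> (U, V) \<in> G \<and> V1 \<subseteq> V \<and> U1 \<inter> V1 = {}
        \<longrightarrow> (U1, V1) \<in> G) \<and>
     (\<forall>U U1 V1 U2 V2. U = U1 \<union> V1 \<and> U = U2 \<union> V2 \<and> (U1, V1) \<in> G \<and> (U2, V2) \<in> G
        \<longrightarrow> (U1 \<inter> U2, V1 \<union> V2) \<in> G)"

definition cba_of :: "'a set \<Rightarrow> ('a \<times> 'a) set \<Rightarrow> 'a balg" where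
  "cba_of W R = {(U, V). U \<subseteq> W \<and> V \<subseteq> W \<and> U \<inter> V = {} \<and>
      (\<exists>w1\<in>U. \<forall>w2\<in>V. (w1, w2) \<in> R \<and> (w2, w1) \<notin> R)}"

definition total_preorder_on :: "'a set \<Rightarrow> ('a \<times> 'a) set \<Rightarrow> bool" where
  "total_preorder_on W R \<longleftrightarrow> R \<subseteq> W \<times> W \<and> refl_on W R \<and> trans R \<and> total_on W R"

definition is_cba :: "'a set \<Rightarrow> 'a balg \<Rightarrow> bool" where
  "is_cba W G \<longleftrightarrow> (\<exists>R. total_preorder_on W R \<and> G = cba_of W R)"

inductive_set Gen :: "'a set \<Rightarrow> 'a balg \<Rightarrow> 'a balg" for W \<Omega> where
  base: "p \<in> \<Omega> \<Longrightarrow> p \<in> RW W \<Longrightarrow> p \<in> Gen W \<Omega>"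
| empty: "U \<subseteq> W \<Longrightarrow> U \<noteq> {} \<Longrightarrow> (U, {}) \<in> Gen W \<Omega>"
| mono: "(U, V) \<in> Gen W \<Omega> \<Longrightarrow> U \<subseteq> U1 \<Longrightarrow> U1 \<subseteq> W \<Longrightarrow> V1 \<subseteq> V \<Longrightarrow> U1 \<inter> V1 = {}
          \<Longrightarrow> (U1, V1) \<in> Gen W \<Omega>"
| meet: "U1 \<union> V1 = U2 \<union> V2 \<Longrightarrow> (U1, V1) \<in> Gen W \<Omega> \<Longrightarrow> (U2, V2) \<in> Gen W \<Omega>
          \<Longrightarrow> (U1 \<inter> U2, V1 \<union> V2) \<in> Gen W \<Omega>"

text \<open>Backbone: list of blocks U_1,...,U_n (list index 0 = block U_1).\<close>
definition is_backbone :: "'a set \<Rightarrow> 'a balg \<Rightarrow> 'a set list \<Rightarrow> bool" where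
  "is_backbone W G bs \<longleftrightarrow>
     (\<forall>i < length bs. bs ! i \<noteq> {}) \<and>
     (\<forall>i < length bs. \<forall>j < length bs. i \<noteq> j \<longrightarrow> bs ! i \<inter> bs ! j = {}) \<and>
     \<Union> (set bs) = W \<and>
     (\<forall>i. i + 1 < length bs \<longrightarrow> (bs ! i, bs ! (i + 1)) \<in> G) \<and>
     (\<forall>i < length bs. \<forall>X Y. X \<subseteq> bs ! i \<and> Y \<subseteq> bs ! i \<and> X \<noteq> {} \<and> Y \<noteq> {} \<and> X \<inter> Y = {}
        \<longrightarrow> (X, Y) \<notin> G)"

definition backbone :: "'a set \<Rightarrow> 'a balg \<Rightarrow> 'a set list" where
  "backbone W G = (THE bs. is_backbone W G bs)"

text \<open>Support I(V) w.r.t. the backbone of G; convention I({}) = {}.\<close>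
definition support :: "'a set \<Rightarrow> 'a balg \<Rightarrow> 'a set \<Rightarrow> 'a set" where
  "support W G V = (if V = {} then {} else
     backbone W G ! (LEAST i. i < length (backbone W G) \<and> V \<inter> backbone W G ! i \<noteq> {}))"

definition block_index :: "'a set \<Rightarrow> 'a balg \<Rightarrow> 'a \<Rightarrow> nat" where
  "block_index W G w = (THE i. i < length (backbone W G) \<and> w \<in> backbone W G ! i)"

definition Com :: "'a set \<Rightarrow> 'a balg \<Rightarrow> 'a balg" where
  "Com W G = cba_of W {(w1, w2). w1 \<in> W \<and> w2 \<in> W \<and> block_index W G w1 \<le> block_index W G w2}"

definition ba_le :: "'a set \<Rightarrow> 'a balg \<Rightarrow> 'a balg \<Rightarrow> bool" where
  "ba_le W G G' \<longleftrightarrow> backbone W G = backbone W G' \<and> G \<subseteq> G'"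

definition revision_operator :: "'a set \<Rightarrow> ('a balg \<Rightarrow> 'a balg \<Rightarrow> 'a balg) \<Rightarrow> bool" where
  "revision_operator W op \<longleftrightarrow>
    (\<forall>G1 G2. belief_algebra W G1 \<and> belief_algebra W G2 \<longrightarrow> belief_algebra W (op G1 G2)) \<and>
    \<comment> \<open>RA1\<close>
    (\<forall>G1 G2. belief_algebra W G1 \<and> belief_algebra W G2 \<longrightarrow> G2 \<subseteq> op G1 G2) \<and>
    \<comment> \<open>RA2\<close>
    (\<forall>G1 G2. belief_algebra W G1 \<and> belief_algebra W G2 \<longrightarrow>
       (\<exists>\<Omega>. \<Omega> \<subseteq> G1 \<union> G2 \<and> op G1 G2 = Gen W \<Omega>)) \<and>
    \<comment> \<open>RA3\<close>
    (\<forall>G1 G2. is_cba W G1 \<and> is_cba W G2 \<longrightarrow> is_cba W (op G1 G2)) \<and>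
    \<comment> \<open>RA4\<close>
    (\<forall>G1 G2 w w'. is_cba W G1 \<and> is_cba W G2 \<and> w \<in> W \<and> w' \<in> W \<and>
       support W G2 {w} = support W G2 {w'} \<longrightarrow>
       (({w}, {w'}) \<in> op G1 G2 \<longleftrightarrow> ({w}, {w'}) \<in> G1)) \<and>
    \<comment> \<open>RA5\<close>
    (\<forall>G1 G2 G1' G2'. belief_algebra W G1 \<and> belief_algebra W G2 \<and>
       belief_algebra W G1' \<and> belief_algebra W G2' \<and>
       ba_le W G1 G1' \<and> ba_le W G2 G2' \<longrightarrow> op G1 G2 \<subseteq> op G1' G2') \<and>
    \<comment> \<open>RA6\<close>
    (\<forall>G1 G2 \<Omega>. belief_algebra W G1 \<and> belief_algebra W G2 \<and> \<Omega> \<subseteq> G1 \<union> G2 \<and>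
       Gen W \<Omega> \<subseteq> op (Com W G1) (Com W G2) \<and> op G1 G2 \<subseteq> Gen W \<Omega> \<longrightarrow>
       op G1 G2 = Gen W \<Omega>)"

end

theory Submission
  imports Defs
begin


lemma ba_parts: assumes "belief_algebra W G"
  shows "G \<subseteq> RW W"
    and "\<And>U. U \<subseteq> W \<Longrightarrow> ((U, {}) \<in> G \<longleftrightarrow> U \<noteq> {})"
    and "\<And>U V. (U, V) \<in> G \<Longrightarrow> (V, U) \<notin> G"
    and "\<And>U V U1 V1. U1 \<subseteq> W \<Longrightarrow> U \<subseteq> U1 \<Longrightarrow> (U, V) \<in> G \<Longrightarrow> V1 \<subseteq> V \<Longrightarrow> U1 \<inter> V1 = {}
        \<Longrightarrow> (U1, V1) \<in> G"
    and "\<And>U1 V1 U2 V2. U1 \<union> V1 = U2 \<union> V2 \<Longrightarrow> (U1, V1) \<in> G \<Longrightarrow> (U2, V2) \<in> G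
        \<Longrightarrow> (U1 \<inter> U2, V1 \<union> V2) \<in> G"
proof -
  note d = assms[unfolded belief_algebra_def]
  show "G \<subseteq> RW W" using d by (rule conjunct1)
  show "\<And>U. U \<subseteq> W \<Longrightarrow> ((U, {}) \<in> G \<longleftrightarrow> U \<noteq> {})" using d[THEN conjunct2, THEN conjunct1] by blast
  show "\<And>U V. (U, V) \<in> G \<Longrightarrow> (V, U) \<notin> G" using d[THEN conjunct2, THEN conjunct2, THEN conjunct1] by blast
  show "\<And>U V U1 V1. U1 \<subseteq> W \<Longrightarrow> U \<subseteq> U1 \<Longrightarrow> (U, V) \<in> G \<Longrightarrow> V1 \<subseteq> V \<Longrightarrow> U1 \<inter> V1 = {}
        \<Longrightarrow> (U1, V1) \<in> G" using d[THEN conjunct2, THEN conjunct2, THEN conjunct2, THEN conjunct1] by blast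
  fix U1 V1 U2 V2 assume "U1 \<union> V1 = U2 \<union> V2" "(U1, V1) \<in> G" "(U2, V2) \<in> G"
  then show "(U1 \<inter> U2, V1 \<union> V2) \<in> G"
    using d[THEN conjunct2, THEN conjunct2, THEN conjunct2, THEN conjunct2, rule_format, of "U1 \<union> V1" U1 V1 U2 V2] by simp
qed

lemma ba_RW: "belief_algebra W G \<Longrightarrow> (U,V) \<in> G \<Longrightarrow> U \<subseteq> W \<and> V \<subseteq> W \<and> U \<inter> V = {}"
  using ba_parts(1) unfolding RW_def by blast

lemma ba_A1: "belief_algebra W G \<Longrightarrow> U \<subseteq> W \<Longrightarrow> (U,{}) \<in> G \<longleftrightarrow> U \<noteq> {}"
  using ba_parts(2) by blast

lemma ba_A3: "belief_algebra W G \<Longrightarrow> (U,V) \<in> G \<Longrightarrow> U \<subseteq> U1 \<Longrightarrow> U1 \<subseteq> W \<Longrightarrow> V1 \<subseteq> V \<Longrightarrow> U1 \<inter> V1 = {} \<Longrightarrow> (U1,V1) \<in> G"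
  using ba_parts(4) by blast

lemma ba_A4: "belief_algebra W G \<Longrightarrow> U1 \<union> V1 = U2 \<union> V2 \<Longrightarrow> (U1,V1) \<in> G \<Longrightarrow> (U2,V2) \<in> G \<Longrightarrow> (U1 \<inter> U2, V1 \<union> V2) \<in> G"
  using ba_parts(5) by blast

lemma bb_parts: assumes "is_backbone S G bs"
  shows "\<And>i. i < length bs \<Longrightarrow> bs ! i \<noteq> {}"
   and "\<And>i j. i < length bs \<Longrightarrow> j < length bs \<Longrightarrow> i \<noteq> j \<Longrightarrow> bs ! i \<inter> bs ! j = {}"
   and "\<Union> (set bs) = S"
   and "\<And>i. i + 1 < length bs \<Longrightarrow> (bs ! i, bs ! (i + 1)) \<in> G"
   and "\<And>i X Y. i < length bs \<Longrightarrow> X \<subseteq> bs ! i \<Longrightarrow> Y \<subseteq> bs ! i \<Longrightarrow> X \<noteq> {} \<Longrightarrow> Y \<noteq> {} \<Longrightarrow> X \<inter> Y = {}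
        \<Longrightarrow> (X, Y) \<notin> G"
proof -
  note d = assms[unfolded is_backbone_def]
  show "\<And>i. i < length bs \<Longrightarrow> bs ! i \<noteq> {}" using d[THEN conjunct1] by blast
  show "\<And>i j. i < length bs \<Longrightarrow> j < length bs \<Longrightarrow> i \<noteq> j \<Longrightarrow> bs ! i \<inter> bs ! j = {}" using d[THEN conjunct2, THEN conjunct1] by blast
  show "\<Union> (set bs) = S" using d[THEN conjunct2, THEN conjunct2, THEN conjunct1] by blast
  show "\<And>i. i + 1 < length bs \<Longrightarrow> (bs ! i, bs ! (i + 1)) \<in> G" using d[THEN conjunct2, THEN conjunct2, THEN conjunct2, THEN conjunct1] by blast
  show "\<And>i X Y. i < length bs \<Longrightarrow> X \<subseteq> bs ! i \<Longrightarrow> Y \<subseteq> bs ! i \<Longrightarrow> X \<noteq> {} \<Longrightarrow> Y \<noteq> {} \<Longrightarrow> X \<inter> Y = {}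
        \<Longrightarrow> (X, Y) \<notin> G" using d[THEN conjunct2, THEN conjunct2, THEN conjunct2, THEN conjunct2] by blast
qed

lemma ba_shrink: "belief_algebra W G \<Longrightarrow> (U,V) \<in> G \<Longrightarrow> V1 \<subseteq> V \<Longrightarrow> (U,V1) \<in> G"
proof -
  assume a: "belief_algebra W G" "(U,V) \<in> G" "V1 \<subseteq> V"
  show ?thesis by (rule ba_A3[OF a(1,2)]) (use ba_RW[OF a(1,2)] a(3) in auto)
qed

lemma ba_left_ne: "belief_algebra W G \<Longrightarrow> (U,V) \<in> G \<Longrightarrow> U \<noteq> {}"
  using ba_shrink[of W G U V "{}"] ba_A1[of W G "{}"] by auto

lemma ba_comb: assumes ba: "belief_algebra W G" and uv: "(U,V) \<in> G" and z: "(U \<union> V, Z) \<in> G"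
  shows "(U, V \<union> Z) \<in> G"
proof -
  have r1: "U \<subseteq> W" "V \<subseteq> W" "U \<inter> V = {}" using ba_RW[OF ba uv] by auto
  have r2: "Z \<subseteq> W" "(U \<union> V) \<inter> Z = {}" using ba_RW[OF ba z] by auto
  have a: "(U \<union> Z, V) \<in> G" by (rule ba_A3[OF ba uv]) (use r1 r2 in auto)
  have "((U \<union> Z) \<inter> (U \<union> V), V \<union> Z) \<in> G" by (rule ba_A4[OF ba _ a z]) auto
  moreover have "(U \<union> Z) \<inter> (U \<union> V) = U" using r2 by auto
  ultimately show ?thesis by simp
qed

lemma bb_Nil: "is_backbone S G [] \<longleftrightarrow> S = {}"
  by (auto simp: is_backbone_def)

lemma bb_Cons: "is_backbone S G (B#bs) \<longleftrightarrow> B \<noteq> {} \<and> B \<subseteq> S \<and>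
   (\<forall>X Y. X \<subseteq> B \<and> Y \<subseteq> B \<and> X \<noteq> {} \<and> Y \<noteq> {} \<and> X \<inter> Y = {} \<longrightarrow> (X,Y) \<notin> G) \<and>
   (bs \<noteq> [] \<longrightarrow> (B, hd bs) \<in> G) \<and> is_backbone (S - B) G bs"
proof
  assume h: "is_backbone S G (B#bs)"
  note d = bb_parts[OF h]
  have ne: "B \<noteq> {}" using d(1)[of 0] by simp
  have sub: "B \<subseteq> S" using d(3) by auto
  have inc: "\<forall>X Y. X \<subseteq> B \<and> Y \<subseteq> B \<and> X \<noteq> {} \<and> Y \<noteq> {} \<and> X \<inter> Y = {} \<longrightarrow> (X,Y) \<notin> G"
    using d(5)[of 0] by simp
  have hd: "bs \<noteq> [] \<longrightarrow> (B, hd bs) \<in> G"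
  proof
    assume "bs \<noteq> []"
    then have "0 + 1 < length (B#bs)" by simp
    then have "((B#bs)!0, (B#bs)!(0+1)) \<in> G" using d(4) by blast
    then show "(B, hd bs) \<in> G" using \<open>bs \<noteq> []\<close> by (simp add: hd_conv_nth)
  qed
  have disj: "\<forall>j < length bs. B \<inter> bs!j = {}"
  proof (intro allI impI)
    fix j assume "j < length bs"
    then have "(B#bs)!0 \<inter> (B#bs)!(Suc j) = {}" using d(2)[of 0 "Suc j"] by simp
    then show "B \<inter> bs!j = {}" by simp
  qed
  have un: "\<Union>(set bs) = S - B"
  proof -
    have "B \<union> \<Union>(set bs) = S" using d(3) by simp
    moreover have "B \<inter> \<Union>(set bs) = {}" using disj by (fastforce simp: in_set_conv_nth)
    ultimately show ?thesis by blast
  qed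
  have "is_backbone (S - B) G bs"
    unfolding is_backbone_def
  proof (intro conjI allI impI)
    fix i assume "i < length bs" then show "bs!i \<noteq> {}" using d(1)[of "Suc i"] by simp
  next
    fix i j assume "i < length bs" "j < length bs" "i \<noteq> j"
    then show "bs!i \<inter> bs!j = {}" using d(2)[of "Suc i" "Suc j"] by simp
  next
    show "\<Union>(set bs) = S - B" by (rule un)
  next
    fix i assume "i + 1 < length bs" then show "(bs!i, bs!(i+1)) \<in> G"
      using d(4)[of "Suc i"] by simp
  next
    fix i X Y assume "i < length bs" "X \<subseteq> bs ! i \<and> Y \<subseteq> bs ! i \<and> X \<noteq> {} \<and> Y \<noteq> {} \<and> X \<inter> Y = {}"
    then show "(X, Y) \<notin> G"
      using d(5)[of "Suc i" X Y] by simp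
  qed
  with ne sub inc hd show "B \<noteq> {} \<and> B \<subseteq> S \<and>
   (\<forall>X Y. X \<subseteq> B \<and> Y \<subseteq> B \<and> X \<noteq> {} \<and> Y \<noteq> {} \<and> X \<inter> Y = {} \<longrightarrow> (X,Y) \<notin> G) \<and>
   (bs \<noteq> [] \<longrightarrow> (B, hd bs) \<in> G) \<and> is_backbone (S - B) G bs" by blast
next
  assume h: "B \<noteq> {} \<and> B \<subseteq> S \<and>
   (\<forall>X Y. X \<subseteq> B \<and> Y \<subseteq> B \<and> X \<noteq> {} \<and> Y \<noteq> {} \<and> X \<inter> Y = {} \<longrightarrow> (X,Y) \<notin> G) \<and>
   (bs \<noteq> [] \<longrightarrow> (B, hd bs) \<in> G) \<and> is_backbone (S - B) G bs"
  then have ne: "B \<noteq> {}" and sub: "B \<subseteq> S"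
    and inc: "\<forall>X Y. X \<subseteq> B \<and> Y \<subseteq> B \<and> X \<noteq> {} \<and> Y \<noteq> {} \<and> X \<inter> Y = {} \<longrightarrow> (X,Y) \<notin> G"
    and hd: "bs \<noteq> [] \<longrightarrow> (B, hd bs) \<in> G" and bb: "is_backbone (S - B) G bs" by blast+
  note d = bb_parts[OF bb]
  have un: "\<Union>(set bs) = S - B" using d(3) by blast
  show "is_backbone S G (B#bs)"
    unfolding is_backbone_def
  proof (intro conjI allI impI)
    fix i assume "i < length (B#bs)" then show "(B#bs)!i \<noteq> {}" using ne d(1) by (cases i) auto
  next
    fix i j assume ij: "i < length (B#bs)" "j < length (B#bs)" "i \<noteq> j"
    show "(B#bs)!i \<inter> (B#bs)!j = {}"
    proof (cases i)
      case 0
      then obtain j' where "j = Suc j'" "j' < length bs" using ij by (cases j) auto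
      then have "bs!j' \<subseteq> S - B" using un nth_mem[of j' bs] by blast
      then show ?thesis using 0 \<open>j = Suc j'\<close> by auto
    next
      case (Suc i')
      show ?thesis
      proof (cases j)
        case 0
        have "i' < length bs" using ij Suc by simp
        then have "bs!i' \<subseteq> S - B" using un nth_mem[of i' bs] by blast
        then show ?thesis using 0 Suc by auto
      next
        case (Suc j')
        then show ?thesis using \<open>i = Suc i'\<close> ij d(2)[of i' j'] by auto
      qed
    qed
  next
    show "\<Union>(set (B#bs)) = S" using un sub by auto
  next
    fix i assume i: "i + 1 < length (B#bs)"
    show "((B#bs)!i, (B#bs)!(i+1)) \<in> G"
    proof (cases i)
      case 0
      then have "bs \<noteq> []" using i by auto
      then show ?thesis using hd 0 by (simp add: hd_conv_nth)
    next
      case (Suc i')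
      then show ?thesis using i d(4)[of i'] by auto
    qed
  next
    fix i X Y assume i: "i < length (B#bs)" and xy: "X \<subseteq> (B#bs) ! i \<and> Y \<subseteq> (B#bs) ! i \<and> X \<noteq> {} \<and> Y \<noteq> {} \<and> X \<inter> Y = {}"
    show "(X, Y) \<notin> G"
    proof (cases i)
      case 0 then show ?thesis using inc xy by auto
    next
      case (Suc i') then show ?thesis using i xy d(5)[of i' X Y] by auto
    qed
  qed
qed


lemma bb_ConsD: assumes "is_backbone S G (B#bs)"
  shows "B \<noteq> {}" and "B \<subseteq> S"
   and "\<And>X Y. X \<subseteq> B \<Longrightarrow> Y \<subseteq> B \<Longrightarrow> X \<noteq> {} \<Longrightarrow> Y \<noteq> {} \<Longrightarrow> X \<inter> Y = {} \<Longrightarrow> (X,Y) \<notin> G"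
   and "bs \<noteq> [] \<Longrightarrow> (B, hd bs) \<in> G" and "is_backbone (S - B) G bs"
proof -
  note d = iffD1[OF bb_Cons assms]
  show "B \<noteq> {}" using d by (rule conjunct1)
  show "B \<subseteq> S" using d[THEN conjunct2] by (rule conjunct1)
  show "\<And>X Y. X \<subseteq> B \<Longrightarrow> Y \<subseteq> B \<Longrightarrow> X \<noteq> {} \<Longrightarrow> Y \<noteq> {} \<Longrightarrow> X \<inter> Y = {} \<Longrightarrow> (X,Y) \<notin> G"
    using d[THEN conjunct2, THEN conjunct2, THEN conjunct1] by blast
  show "bs \<noteq> [] \<Longrightarrow> (B, hd bs) \<in> G" using d[THEN conjunct2, THEN conjunct2, THEN conjunct2, THEN conjunct1] by blast
  show "is_backbone (S - B) G bs" using d[THEN conjunct2, THEN conjunct2, THEN conjunct2, THEN conjunct2] .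
qed

lemma bb_ConsI: "B \<noteq> {} \<Longrightarrow> B \<subseteq> S \<Longrightarrow>
   (\<And>X Y. X \<subseteq> B \<Longrightarrow> Y \<subseteq> B \<Longrightarrow> X \<noteq> {} \<Longrightarrow> Y \<noteq> {} \<Longrightarrow> X \<inter> Y = {} \<Longrightarrow> (X,Y) \<notin> G) \<Longrightarrow>
   (bs \<noteq> [] \<Longrightarrow> (B, hd bs) \<in> G) \<Longrightarrow> is_backbone (S - B) G bs \<Longrightarrow> is_backbone S G (B#bs)"
  by (rule iffD2[OF bb_Cons]) blast




lemma bb_chain: "belief_algebra W G \<Longrightarrow> S \<subseteq> W \<Longrightarrow> is_backbone S G (B#bs) \<Longrightarrow> (B, S - B) \<in> G"
proof (induction bs arbitrary: S B)
  case Nil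
  have "B \<noteq> {}" "B \<subseteq> S" "is_backbone (S - B) G []" using bb_ConsD[OF Nil.prems(3)] by auto
  then have "B \<noteq> {}" "B \<subseteq> S" "S - B = {}" by (auto simp: bb_Nil)
  then show ?case using ba_A1[OF Nil.prems(1), of B] Nil.prems(2) by auto
next
  case (Cons C cs)
  from Cons.prems(3) have hB: "B \<noteq> {}" "B \<subseteq> S" "(B, C) \<in> G" "is_backbone (S - B) G (C#cs)"
    using bb_ConsD[OF Cons.prems(3)] by auto
  have IH: "(C, (S - B) - C) \<in> G" using Cons.IH[OF Cons.prems(1) _ hB(4)] Cons.prems(2) by auto
  have cs: "C \<subseteq> S - B" using bb_ConsD(2)[OF hB(4)] .
  have "(B \<union> C, (S - B) - C) \<in> G" by (rule ba_A3[OF Cons.prems(1) IH]) (use Cons.prems(2) hB(2) cs in auto)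
  from ba_comb[OF Cons.prems(1) hB(3) this] have "(B, C \<union> ((S-B)-C)) \<in> G" .
  moreover have "C \<union> ((S-B)-C) = S - B" using cs by auto
  ultimately show ?case by simp
qed

lemma bb_head_unique: assumes ba: "belief_algebra W G" and SW: "S \<subseteq> W"
  and b1: "is_backbone S G (B#bs)" and b2: "is_backbone S G (C#cs)" shows "B \<subseteq> C"
proof (rule ccontr)
  assume nBC: "\<not> B \<subseteq> C"
  have cB: "(B, S - B) \<in> G" by (rule bb_chain[OF ba SW b1])
  have cC: "(C, S - C) \<in> G" by (rule bb_chain[OF ba SW b2])
  note sB = bb_ConsD(2)[OF b1] and incB = bb_ConsD(3)[OF b1]
  have sC: "C \<subseteq> S" using bb_ConsD(2)[OF b2] .
  have "(B \<inter> C, (S - B) \<union> (S - C)) \<in> G" by (rule ba_A4[OF ba _ cB cC]) (use sB sC in auto)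
  then have m: "(B \<inter> C, B - C) \<in> G" by (rule ba_shrink[OF ba]) (use sB in auto)
  then have "B \<inter> C \<noteq> {}" by (rule ba_left_ne[OF ba])
  moreover have "B - C \<noteq> {}" using nBC by auto
  ultimately have "(B \<inter> C, B - C) \<notin> G" by (intro incB) auto
  with m show False by simp
qed

lemma bb_unique: "belief_algebra W G \<Longrightarrow> S \<subseteq> W \<Longrightarrow> is_backbone S G bs \<Longrightarrow> is_backbone S G cs \<Longrightarrow> bs = cs"
proof (induction bs arbitrary: S cs)
  case Nil
  then have S0: "S = {}" by (simp add: bb_Nil)
  show ?case
  proof (cases cs)
    case Nil then show ?thesis by simp
  next
    case (Cons C cs')
    then have "C \<noteq> {}" "C \<subseteq> S" using bb_ConsD(1,2) Nil.prems(4) by blast+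
    then show ?thesis using S0 by simp
  qed
next
  case (Cons B bs)
  have "B \<noteq> {}" "B \<subseteq> S" using bb_ConsD(1,2)[OF Cons.prems(3)] by blast+
  then have "S \<noteq> {}" by blast
  then obtain C cs' where cs: "cs = C # cs'" using Cons.prems(4) by (cases cs) (auto simp: bb_Nil)
  have "B \<subseteq> C" by (rule bb_head_unique[OF Cons.prems(1,2,3)]) (use Cons.prems(4) cs in simp)
  moreover have "C \<subseteq> B" by (rule bb_head_unique[OF Cons.prems(1,2)]) (use Cons.prems(3,4) cs in simp_all)
  ultimately have BC: "B = C" by blast
  have "is_backbone (S - B) G bs" using bb_ConsD(5)[OF Cons.prems(3)] .
  moreover have "is_backbone (S - B) G cs'" using bb_ConsD(5)[of S G C cs'] Cons.prems(4) cs BC by simp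
  ultimately have "bs = cs'" using Cons.IH[OF Cons.prems(1)] Cons.prems(2) by blast
  then show ?case using cs BC by simp
qed

lemma bb_exists: assumes ba: "belief_algebra W G" and fin: "finite W"
  shows "S \<subseteq> W \<Longrightarrow> \<exists>bs. is_backbone S G bs"
proof (induction "card S" arbitrary: S rule: less_induct)
  case less
  show ?case
  proof (cases "S = {}")
    case True then show ?thesis using bb_Nil by blast
  next
    case False
    let ?P = "\<lambda>X. X \<subseteq> S \<and> (X, S - X) \<in> G"
    have PS: "?P S" using ba_A1[OF ba less.prems] False by simp
    obtain X where PX: "?P X" and minX: "\<And>Y. ?P Y \<Longrightarrow> card X \<le> card Y"
      using ex_has_least_nat[of ?P S card] PS by blast
    have finS: "finite S" using fin less.prems finite_subset by blast
    have XS: "X \<subseteq> S" and cut: "(X, S - X) \<in> G" using PX by auto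
    have Xne: "X \<noteq> {}" using ba_left_ne[OF ba cut] .
    have inc: "(X1,Y) \<notin> G" if h0: "X1 \<subseteq> X" "Y \<subseteq> X" "X1 \<noteq> {}" "Y \<noteq> {}" "X1 \<inter> Y = {}" for X1 Y
    proof
      assume g: "(X1, Y) \<in> G"
      have h: "X1 \<subseteq> X \<and> Y \<subseteq> X \<and> X1 \<noteq> {} \<and> Y \<noteq> {} \<and> X1 \<inter> Y = {}" using h0 by blast
      have g2: "(X - Y, Y) \<in> G" by (rule ba_A3[OF ba g]) (use h XS less.prems in auto)
      have "(X - Y) \<union> Y = X" using h by auto
      then have "((X - Y) \<union> Y, S - X) \<in> G" using cut by simp
      from ba_comb[OF ba g2 this] have "(X - Y, Y \<union> (S - X)) \<in> G" .
      moreover have "Y \<union> (S - X) = S - (X - Y)" using h XS by auto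
      ultimately have "?P (X - Y)" using XS by auto
      then have "card X \<le> card (X - Y)" by (rule minX)
      moreover have "card (X - Y) < card X"
        by (rule psubset_card_mono) (use h XS finS finite_subset in auto)
      ultimately show False by simp
    qed
    have "card (S - X) < card S"
      by (rule psubset_card_mono) (use XS Xne finS in auto)
    then obtain bs where bs: "is_backbone (S - X) G bs" using less.hyps[of "S - X"] less.prems by blast
    have hd: "bs \<noteq> [] \<longrightarrow> (X, hd bs) \<in> G"
    proof
      assume "bs \<noteq> []"
      then have "hd bs \<in> set bs" by simp
      then have "hd bs \<subseteq> S - X" using bb_parts(3)[OF bs] by blast
      then show "(X, hd bs) \<in> G" by (rule ba_shrink[OF ba cut])
    qed
    have "is_backbone S G (X # bs)" by (rule bb_ConsI[OF Xne XS inc]) (use hd bs in auto)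
    then show ?thesis by blast
  qed
qed

fun rk :: "'a set list \<Rightarrow> 'a \<Rightarrow> nat" where
  "rk [] w = 0"
| "rk (B#bs) w = (if w \<in> B then 0 else Suc (rk bs w))"

lemma rk_in: "is_backbone S G bs \<Longrightarrow> w \<in> S \<Longrightarrow> rk bs w < length bs \<and> w \<in> bs ! rk bs w"
proof (induction bs arbitrary: S)
  case Nil then show ?case by (simp add: bb_Nil)
next
  case (Cons B bs)
  have "is_backbone (S - B) G bs" using bb_ConsD(5)[OF Cons.prems(1)] .
  then show ?case using Cons.IH[of "S - B"] Cons.prems(2) by auto
qed

lemma rk_eq: assumes "is_backbone S G bs" "i < length bs" "w \<in> bs ! i" shows "rk bs w = i"
proof -
  have "w \<in> S" using bb_parts(3)[OF assms(1)] assms(2,3) nth_mem by blast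
  then have "rk bs w < length bs" "w \<in> bs ! rk bs w" using rk_in[OF assms(1)] by auto
  then show ?thesis using bb_parts(2)[OF assms(1), of i "rk bs w"] assms by blast
qed

lemma bb_head_avoid: assumes ba: "belief_algebra W G" and SW: "S \<subseteq> W"
  and b: "is_backbone S G (B#bs)" and uv: "(U,V) \<in> G" and US: "U \<subseteq> S"
  shows "V \<inter> B = {}"
proof (rule ccontr)
  assume ne: "V \<inter> B \<noteq> {}"
  define X where "X = V \<inter> B"
  have cB: "(B, S - B) \<in> G" by (rule bb_chain[OF ba SW b])
  note sB = bb_ConsD(2)[OF b] and incB = bb_ConsD(3)[OF b]
  have r: "U \<subseteq> W" "V \<subseteq> W" "U \<inter> V = {}" using ba_RW[OF ba uv] by auto
  have uX: "(U, X) \<in> G" by (rule ba_shrink[OF ba uv]) (auto simp: X_def)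
  have a: "(U \<union> (B - X), X) \<in> G" by (rule ba_A3[OF ba uX]) (use r sB SW in \<open>auto simp: X_def\<close>)
  have bb: "(B, U - B) \<in> G" by (rule ba_shrink[OF ba cB]) (use US in auto)
  have "((U \<union> (B - X)) \<inter> B, X \<union> (U - B)) \<in> G" by (rule ba_A4[OF ba _ a bb]) (auto simp: X_def)
  moreover have "(U \<union> (B - X)) \<inter> B = B - X" using r by (auto simp: X_def)
  ultimately have "(B - X, X \<union> (U - B)) \<in> G" by simp
  then have m: "(B - X, X) \<in> G" by (rule ba_shrink[OF ba]) auto
  then have "B - X \<noteq> {}" by (rule ba_left_ne[OF ba])
  then have "(B - X, X) \<notin> G" by (intro incB) (use ne in \<open>auto simp: X_def\<close>)
  with m show False by simp
qed

lemma bb_rank: assumes ba: "belief_algebra W G"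
  shows "S \<subseteq> W \<Longrightarrow> is_backbone S G bs \<Longrightarrow> (U,V) \<in> G \<Longrightarrow> U \<subseteq> S \<Longrightarrow> V \<subseteq> S
    \<Longrightarrow> \<exists>w1\<in>U. \<forall>w2\<in>V. rk bs w1 < rk bs w2"
proof (induction bs arbitrary: S)
  case Nil
  then have "U = {}" by (simp add: bb_Nil)
  then show ?case using ba_left_ne[OF ba Nil.prems(3)] by simp
next
  case (Cons B bs)
  have VB: "V \<inter> B = {}" by (rule bb_head_avoid[OF ba Cons.prems(1,2,3,4)])
  show ?case
  proof (cases "U \<inter> B = {}")
    case False
    then obtain w1 where "w1 \<in> U" "w1 \<in> B" by blast
    then show ?thesis using VB by (intro bexI[of _ w1]) auto
  next
    case True
    have b': "is_backbone (S - B) G bs" using bb_ConsD(5)[OF Cons.prems(2)] .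
    have "\<exists>w1\<in>U. \<forall>w2\<in>V. rk bs w1 < rk bs w2"
      by (rule Cons.IH[OF _ b' Cons.prems(3)]) (use Cons.prems True VB in auto)
    then show ?thesis using True VB by fastforce
  qed
qed




lemma backbone_ok: assumes ba: "belief_algebra W G" and fin: "finite W"
  shows "is_backbone W G (backbone W G)"
proof -
  obtain bs where bs: "is_backbone W G bs" using bb_exists[OF ba fin, of W] by blast
  have "backbone W G = bs" unfolding backbone_def
    by (rule the_equality[where P="\<lambda>bs. is_backbone W G bs", OF bs]) (use bb_unique[OF ba _ _ bs] in blast)
  then show ?thesis using bs by simp
qed

lemma block_index_rk: assumes ba: "belief_algebra W G" and fin: "finite W" and w: "w \<in> W"
  shows "block_index W G w = rk (backbone W G) w"
proof -
  note bb = backbone_ok[OF ba fin]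
  show ?thesis unfolding block_index_def
    by (rule the_equality) (use rk_in[OF bb w] rk_eq[OF bb] in auto)
qed

definition rkba :: "'a set \<Rightarrow> 'a set list \<Rightarrow> 'a balg" where
  "rkba W bs = {(U,V). U \<subseteq> W \<and> V \<subseteq> W \<and> U \<inter> V = {} \<and> (\<exists>w1\<in>U. \<forall>w2\<in>V. rk bs w1 < rk bs w2)}"

lemma ex_all_cong: "U \<subseteq> W \<Longrightarrow> V \<subseteq> W \<Longrightarrow> (\<And>a b. a \<in> W \<Longrightarrow> b \<in> W \<Longrightarrow> P a b \<longleftrightarrow> Q a b)
  \<Longrightarrow> (\<exists>a\<in>U. \<forall>b\<in>V. P a b) \<longleftrightarrow> (\<exists>a\<in>U. \<forall>b\<in>V. Q a b)"
  by (metis subsetD)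

lemma Com_eq: assumes ba: "belief_algebra W G" and fin: "finite W"
  shows "Com W G = rkba W (backbone W G)"
proof -
  let ?bs = "backbone W G"
  define R where "R = {(w1, w2). w1 \<in> W \<and> w2 \<in> W \<and> block_index W G w1 \<le> block_index W G w2}"
  have key: "((w1,w2) \<in> R \<and> (w2,w1) \<notin> R) \<longleftrightarrow> rk ?bs w1 < rk ?bs w2" if "w1 \<in> W" "w2 \<in> W" for w1 w2
    using block_index_rk[OF ba fin that(1)] block_index_rk[OF ba fin that(2)] that unfolding R_def by auto
  have "(U,V) \<in> cba_of W R \<longleftrightarrow> (U,V) \<in> rkba W ?bs" for U V
  proof -
    have "(U,V) \<in> cba_of W R \<longleftrightarrow> U \<subseteq> W \<and> V \<subseteq> W \<and> U \<inter> V = {} \<and> (\<exists>w1\<in>U. \<forall>w2\<in>V. (w1,w2) \<in> R \<and> (w2,w1) \<notin> R)"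
      unfolding cba_of_def by (simp only: mem_Collect_eq case_prod_conv)
    also have "\<dots> \<longleftrightarrow> U \<subseteq> W \<and> V \<subseteq> W \<and> U \<inter> V = {} \<and> (\<exists>w1\<in>U. \<forall>w2\<in>V. rk ?bs w1 < rk ?bs w2)"
      using ex_all_cong[of U W V "\<lambda>w1 w2. (w1,w2) \<in> R \<and> (w2,w1) \<notin> R" "\<lambda>w1 w2. rk ?bs w1 < rk ?bs w2"] key by blast
    also have "\<dots> \<longleftrightarrow> (U,V) \<in> rkba W ?bs" unfolding rkba_def by (simp only: mem_Collect_eq case_prod_conv)
    finally show ?thesis .
  qed
  then have "cba_of W R = rkba W ?bs" by auto
  then show ?thesis unfolding Com_def R_def .
qed

lemma cba_ba: assumes tp: "total_preorder_on W R" shows "belief_algebra W (cba_of W R)"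
proof -
  have RW: "R \<subseteq> W \<times> W" and rf: "\<And>w. w \<in> W \<Longrightarrow> (w,w) \<in> R" and tr: "\<And>a b c. (a,b) \<in> R \<Longrightarrow> (b,c) \<in> R \<Longrightarrow> (a,c) \<in> R"
    and tot: "\<And>a b. a \<in> W \<Longrightarrow> b \<in> W \<Longrightarrow> a \<noteq> b \<Longrightarrow> (a,b) \<in> R \<or> (b,a) \<in> R"
    using tp unfolding total_preorder_on_def refl_on_def trans_def total_on_def by blast+
  let ?G = "cba_of W R"
  have a0: "?G \<subseteq> RW W" unfolding cba_of_def RW_def by auto
  have a1: "\<forall>U. U \<subseteq> W \<longrightarrow> ((U, {}) \<in> ?G \<longleftrightarrow> U \<noteq> {})" unfolding cba_of_def by auto
  have a2: "\<forall>U V. (U, V) \<in> ?G \<longrightarrow> (V, U) \<notin> ?G" unfolding cba_of_def by blast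
  have a3: "\<forall>U V U1 V1. U1 \<subseteq> W \<and> U \<subseteq> U1 \<and> (U, V) \<in> ?G \<and> V1 \<subseteq> V \<and> U1 \<inter> V1 = {}
        \<longrightarrow> (U1, V1) \<in> ?G" unfolding cba_of_def by blast
  have a4: "(U1 \<inter> U2, V1 \<union> V2) \<in> ?G" if h: "U1 \<union> V1 = U2 \<union> V2" "(U1, V1) \<in> ?G" "(U2, V2) \<in> ?G" for U1 V1 U2 V2
  proof -
    have s: "U1 \<subseteq> W" "V1 \<subseteq> W" "U1 \<inter> V1 = {}" "U2 \<subseteq> W" "V2 \<subseteq> W" "U2 \<inter> V2 = {}"
      using h(2,3) unfolding cba_of_def by auto
    obtain a where a: "a \<in> U1" "\<forall>v\<in>V1. (a,v) \<in> R \<and> (v,a) \<notin> R" using h(2) unfolding cba_of_def by blast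
    obtain b where b: "b \<in> U2" "\<forall>v\<in>V2. (b,v) \<in> R \<and> (v,b) \<notin> R" using h(3) unfolding cba_of_def by blast
    have transfer: "\<forall>v\<in>V. (x,v) \<in> R \<and> (v,x) \<notin> R"
      if "(x,y) \<in> R" "\<forall>v\<in>V. (y,v) \<in> R \<and> (v,y) \<notin> R" for x y V
      using that tr by blast
    have notin: "x \<notin> V" if "x \<in> W" "\<forall>v\<in>V. (x,v) \<in> R \<and> (v,x) \<notin> R" for x V
      using that rf by blast
    have "\<exists>w1\<in>U1 \<inter> U2. \<forall>w2\<in>V1 \<union> V2. (w1, w2) \<in> R \<and> (w2, w1) \<notin> R"
    proof (cases "(a,b) \<in> R")
      case True
      have av2: "\<forall>v\<in>V2. (a,v) \<in> R \<and> (v,a) \<notin> R" by (rule transfer[OF True b(2)])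
      have "a \<notin> V2" using notin[OF _ av2] a(1) s(1) by blast
      then have "a \<in> U2" using h(1) a(1) by blast
      then show ?thesis using a av2 by blast
    next
      case False
      have "a \<noteq> b" using False rf a(1) s(1) by blast
      then have ba: "(b,a) \<in> R" using tot[of a b] False a(1) b(1) s(1,4) by blast
      have bv1: "\<forall>v\<in>V1. (b,v) \<in> R \<and> (v,b) \<notin> R" by (rule transfer[OF ba a(2)])
      have "b \<notin> V1" using notin[OF _ bv1] b(1) s(4) by blast
      then have "b \<in> U1" using h(1) b(1) by blast
      then show ?thesis using b bv1 by blast
    qed
    then show ?thesis unfolding cba_of_def using s by blast
  qed
  show ?thesis unfolding belief_algebra_def
  proof (intro conjI)
    show "\<forall>U U1 V1 U2 V2. U = U1 \<union> V1 \<and> U = U2 \<union> V2 \<and> (U1, V1) \<in> ?G \<and> (U2, V2) \<in> ?G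
        \<longrightarrow> (U1 \<inter> U2, V1 \<union> V2) \<in> ?G"
    proof (intro allI impI)
      fix U U1 V1 U2 V2 assume "U = U1 \<union> V1 \<and> U = U2 \<union> V2 \<and> (U1, V1) \<in> ?G \<and> (U2, V2) \<in> ?G"
      then show "(U1 \<inter> U2, V1 \<union> V2) \<in> ?G" using a4 by metis
    qed
  qed (fact a0 a1 a2 a3)+
qed

lemma is_cba_ba: "is_cba W G \<Longrightarrow> belief_algebra W G"
  unfolding is_cba_def using cba_ba by blast

lemma Com_cba: "is_cba W (Com W G)"
proof -
  have "total_preorder_on W {(w1, w2). w1 \<in> W \<and> w2 \<in> W \<and> block_index W G w1 \<le> block_index W G w2}"
    unfolding total_preorder_on_def refl_on_def trans_def total_on_def by auto
  then show ?thesis unfolding is_cba_def Com_def by blast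
qed

lemma G_sub_Com: assumes ba: "belief_algebra W G" and fin: "finite W" shows "G \<subseteq> Com W G"
proof
  fix p assume p: "p \<in> G"
  obtain U V where pu: "p = (U,V)" by (cases p)
  have uv: "(U,V) \<in> G" using p pu by simp
  have r: "U \<subseteq> W" "V \<subseteq> W" "U \<inter> V = {}" using ba_RW[OF ba uv] by auto
  have "\<exists>w1\<in>U. \<forall>w2\<in>V. rk (backbone W G) w1 < rk (backbone W G) w2"
    by (rule bb_rank[OF ba order_refl backbone_ok[OF ba fin] uv r(1,2)])
  then show "p \<in> Com W G" unfolding Com_eq[OF ba fin] rkba_def using pu r by simp
qed

lemma rkba_bb: assumes bb: "is_backbone W G bs" shows "is_backbone W (rkba W bs) bs"
proof -
  note d = bb_parts[OF bb]
  have sub: "bs ! i \<subseteq> W" if "i < length bs" for i using d(3) nth_mem[OF that] by blast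
  show ?thesis unfolding is_backbone_def
  proof (intro conjI allI impI)
    fix i assume "i < length bs" then show "bs ! i \<noteq> {}" by (rule d(1))
  next
    fix i j assume "i < length bs" "j < length bs" "i \<noteq> j" then show "bs ! i \<inter> bs ! j = {}" by (rule d(2))
  next
    show "\<Union>(set bs) = W" by (rule d(3))
  next
    fix i assume i: "i + 1 < length bs"
    obtain w1 where w1: "w1 \<in> bs ! i" using d(1)[of i] i by auto
    have "rk bs w1 = i" using rk_eq[OF bb _ w1] i by simp
    moreover have "\<forall>w2\<in>bs ! (i+1). rk bs w2 = i + 1" using rk_eq[OF bb] i by blast
    ultimately have "\<exists>w1\<in>bs ! i. \<forall>w2\<in>bs ! (i+1). rk bs w1 < rk bs w2" using w1 by auto
    moreover have "bs ! i \<inter> bs ! (i+1) = {}" using d(2)[of i "i+1"] i by simp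
    ultimately show "(bs ! i, bs ! (i + 1)) \<in> rkba W bs" unfolding rkba_def using sub[of i] sub[of "i+1"] i by auto
  next
    fix i X Y assume i: "i < length bs" and xy: "X \<subseteq> bs ! i \<and> Y \<subseteq> bs ! i \<and> X \<noteq> {} \<and> Y \<noteq> {} \<and> X \<inter> Y = {}"
    have eq: "\<forall>w\<in>bs ! i. rk bs w = i" using rk_eq[OF bb i] by blast
    show "(X, Y) \<notin> rkba W bs"
    proof
      assume "(X, Y) \<in> rkba W bs"
      then obtain w1 where "w1 \<in> X" "\<forall>w2\<in>Y. rk bs w1 < rk bs w2" unfolding rkba_def by blast
      moreover obtain w2 where "w2 \<in> Y" using xy by blast
      ultimately show False using eq xy by force
    qed
  qed
qed

lemma backbone_Com: assumes ba: "belief_algebra W G" and fin: "finite W"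
  shows "backbone W (Com W G) = backbone W G"
proof -
  have baC: "belief_algebra W (Com W G)" by (rule is_cba_ba[OF Com_cba])
  have "is_backbone W (Com W G) (backbone W G)"
    unfolding Com_eq[OF ba fin] by (rule rkba_bb[OF backbone_ok[OF ba fin]])
  then show ?thesis using bb_unique[OF baC order_refl backbone_ok[OF baC fin]] by blast
qed

lemma cba_strict: assumes G: "G = cba_of W R" and tp: "total_preorder_on W R"
  shows "S \<subseteq> W \<Longrightarrow> is_backbone S G bs \<Longrightarrow> w \<in> S \<Longrightarrow> w' \<in> S \<Longrightarrow> rk bs w < rk bs w'
     \<Longrightarrow> (w, w') \<in> R \<and> (w', w) \<notin> R"
proof (induction bs arbitrary: S)
  case Nil then show ?case by simp
next
  case (Cons B bs)
  have ba: "belief_algebra W G" using cba_ba[OF tp] G by simp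
  have rf: "\<And>w. w \<in> W \<Longrightarrow> (w,w) \<in> R" and tr: "\<And>a b c. (a,b) \<in> R \<Longrightarrow> (b,c) \<in> R \<Longrightarrow> (a,c) \<in> R"
    and tot: "\<And>a b. a \<in> W \<Longrightarrow> b \<in> W \<Longrightarrow> a \<noteq> b \<Longrightarrow> (a,b) \<in> R \<or> (b,a) \<in> R"
    using tp unfolding total_preorder_on_def refl_on_def trans_def total_on_def by blast+
  show ?case
  proof (cases "w \<in> B")
    case True
    have w'B: "w' \<notin> B" using Cons.prems(5) True by (auto split: if_splits)
    have cB: "(B, S - B) \<in> G" by (rule bb_chain[OF ba Cons.prems(1,2)])
    have "(B, {w'}) \<in> G" by (rule ba_shrink[OF ba cB]) (use w'B Cons.prems(4) in auto)
    then obtain w1 where w1: "w1 \<in> B" "(w1, w') \<in> R" "(w', w1) \<notin> R" unfolding G cba_of_def by blast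
    have BS: "B \<subseteq> S" by (rule bb_ConsD(2)[OF Cons.prems(2)])
    have ww1: "(w, w1) \<in> R"
    proof (rule ccontr)
      assume n: "(w, w1) \<notin> R"
      have wW: "w \<in> W" "w1 \<in> W" using True w1(1) BS Cons.prems(1) by auto
      have "w \<noteq> w1" using n rf wW by blast
      then have "(w1, w) \<in> R" using tot[OF wW] n by blast
      then have "({w1}, {w}) \<in> G" unfolding G cba_of_def using wW n \<open>w \<noteq> w1\<close> by auto
      moreover have "({w1}, {w}) \<notin> G"
        by (rule bb_ConsD(3)[OF Cons.prems(2)]) (use True w1(1) \<open>w \<noteq> w1\<close> in auto)
      ultimately show False by simp
    qed
    have "(w, w') \<in> R" using tr[OF ww1 w1(2)] .
    moreover have "(w', w) \<notin> R" using tr[of w' w w1] ww1 w1(3) by blast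
    ultimately show ?thesis by simp
  next
    case False
    have w'B: "w' \<notin> B" using Cons.prems(5) False by (auto split: if_splits)
    have b': "is_backbone (S - B) G bs" by (rule bb_ConsD(5)[OF Cons.prems(2)])
    show ?thesis
      by (rule Cons.IH[OF _ b']) (use Cons.prems False w'B in auto)
  qed
qed

lemma cba_rkba: assumes cb: "is_cba W G" and fin: "finite W"
  shows "G = rkba W (backbone W G)"
proof -
  have ba: "belief_algebra W G" by (rule is_cba_ba[OF cb])
  obtain R where tp: "total_preorder_on W R" and G: "G = cba_of W R" using cb unfolding is_cba_def by blast
  have "G \<subseteq> rkba W (backbone W G)" using G_sub_Com[OF ba fin] Com_eq[OF ba fin] by simp
  moreover have "rkba W (backbone W G) \<subseteq> G"
  proof
    fix p assume p: "p \<in> rkba W (backbone W G)"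
    obtain U V where pu: "p = (U,V)" by (cases p)
    have r: "U \<subseteq> W" "V \<subseteq> W" "U \<inter> V = {}" using p pu unfolding rkba_def by auto
    obtain w1 where w1: "w1 \<in> U" "\<forall>w2\<in>V. rk (backbone W G) w1 < rk (backbone W G) w2"
      using p pu unfolding rkba_def by blast
    have "\<forall>w2\<in>V. (w1, w2) \<in> R \<and> (w2, w1) \<notin> R"
      using cba_strict[OF G tp order_refl backbone_ok[OF ba fin]] w1 r by blast
    then show "p \<in> G" unfolding G cba_of_def using pu r w1(1) by blast
  qed
  ultimately show ?thesis by blast
qed




lemma Gen_mono: "X \<subseteq> Y \<Longrightarrow> Gen W X \<subseteq> Gen W Y"
proof
  fix p assume XY: "X \<subseteq> Y" and p: "p \<in> Gen W X"
  from p show "p \<in> Gen W Y"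
  proof (induction rule: Gen.induct)
    case (base p) then show ?case using XY by (blast intro: Gen.base)
  next
    case (empty U) then show ?case by (rule Gen.empty)
  next
    case (mono U V U1 V1) then show ?case by (blast intro: Gen.mono)
  next
    case (meet U1 V1 U2 V2) then show ?case by (blast intro: Gen.meet)
  qed
qed

lemma Gen_sub: assumes ba: "belief_algebra W B" shows "X \<subseteq> B \<Longrightarrow> Gen W X \<subseteq> B"
proof
  fix p assume XB: "X \<subseteq> B" and p: "p \<in> Gen W X"
  from p show "p \<in> B"
  proof (induction rule: Gen.induct)
    case (base p) then show ?case using XB by blast
  next
    case (empty U) then show ?case using ba_A1[OF ba] by blast
  next
    case (mono U V U1 V1) then show ?case using ba_A3[OF ba] by blast
  next
    case (meet U1 V1 U2 V2) then show ?case using ba_A4[OF ba] by blast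
  qed
qed

lemma Gen_base_sub: "X \<subseteq> RW W \<Longrightarrow> X \<subseteq> Gen W X"
  by (auto intro: Gen.base)

lemma mi_facts: assumes bb: "is_backbone W G bs" and U: "U \<subseteq> W" "U \<noteq> {}"
  shows "(LEAST i. i < length bs \<and> U \<inter> bs!i \<noteq> {}) < length bs"
    and "\<exists>w\<in>U. rk bs w = (LEAST i. i < length bs \<and> U \<inter> bs!i \<noteq> {})"
    and "\<forall>w\<in>U. (LEAST i. i < length bs \<and> U \<inter> bs!i \<noteq> {}) \<le> rk bs w"
proof -
  let ?m = "LEAST i. i < length bs \<and> U \<inter> bs!i \<noteq> {}"
  obtain w where w: "w \<in> U" using U by blast
  have P: "rk bs w < length bs \<and> U \<inter> bs ! rk bs w \<noteq> {}" using rk_in[OF bb] w U by blast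
  have L: "?m < length bs \<and> U \<inter> bs ! ?m \<noteq> {}" by (rule LeastI[where P="\<lambda>i. i < length bs \<and> U \<inter> bs!i \<noteq> {}", OF P])
  then show "?m < length bs" by simp
  from L obtain w' where "w' \<in> U" "w' \<in> bs ! ?m" by blast
  then show "\<exists>w\<in>U. rk bs w = ?m" using rk_eq[OF bb, of ?m w'] L by blast
  show "\<forall>w\<in>U. ?m \<le> rk bs w"
  proof
    fix x assume x: "x \<in> U"
    have "rk bs x < length bs \<and> U \<inter> bs ! rk bs x \<noteq> {}" using rk_in[OF bb] x U by blast
    then show "?m \<le> rk bs x" by (rule Least_le)
  qed
qed

lemma rkba_support: assumes bb: "is_backbone W G (backbone W G)"
  and U: "U \<subseteq> W" and V: "V \<subseteq> W" and UV: "U \<inter> V = {}"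
  shows "(U,V) \<in> rkba W (backbone W G) \<longleftrightarrow> (support W G U, support W G V) \<in> rkba W (backbone W G)"
proof -
  let ?bs = "backbone W G"
  let ?m = "\<lambda>U. LEAST i. i < length ?bs \<and> U \<inter> ?bs!i \<noteq> {}"
  have sub: "?bs ! i \<subseteq> W" if "i < length ?bs" for i using bb_parts(3)[OF bb] nth_mem[OF that] by blast
  have rkb: "\<forall>w\<in>?bs ! i. rk ?bs w = i" if "i < length ?bs" for i using rk_eq[OF bb that] by blast
  show ?thesis
  proof (cases "U = {}")
    case True then show ?thesis by (simp add: rkba_def support_def)
  next
    case Une: False
    note mU = mi_facts[OF bb U Une]
    have sU: "support W G U = ?bs ! ?m U" using Une by (simp add: support_def)
    have neU: "?bs ! ?m U \<noteq> {}" using bb_parts(1)[OF bb mU(1)] .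
    show ?thesis
    proof (cases "V = {}")
      case True
      then show ?thesis using sU neU sub[OF mU(1)] U Une by (simp add: rkba_def support_def ex_in_conv)
    next
      case Vne: False
      note mV = mi_facts[OF bb V Vne]
      have sV: "support W G V = ?bs ! ?m V" using Vne by (simp add: support_def)
      have neV: "?bs ! ?m V \<noteq> {}" using bb_parts(1)[OF bb mV(1)] .
      have L: "(U,V) \<in> rkba W ?bs \<longleftrightarrow> ?m U < ?m V"
      proof
        assume "(U,V) \<in> rkba W ?bs"
        then obtain w1 where w1: "w1 \<in> U" "\<forall>w2\<in>V. rk ?bs w1 < rk ?bs w2" unfolding rkba_def by blast
        obtain w2 where w2: "w2 \<in> V" "rk ?bs w2 = ?m V" using mV(2) by blast
        show "?m U < ?m V" using mU(3) w1 w2 by force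
      next
        assume lt: "?m U < ?m V"
        obtain w1 where w1: "w1 \<in> U" "rk ?bs w1 = ?m U" using mU(2) by blast
        have "\<forall>w2\<in>V. rk ?bs w1 < rk ?bs w2" using mV(3) w1 lt by force
        then show "(U,V) \<in> rkba W ?bs" unfolding rkba_def using U V UV w1(1) by blast
      qed
      have R: "(?bs ! ?m U, ?bs ! ?m V) \<in> rkba W ?bs \<longleftrightarrow> ?m U < ?m V"
      proof
        assume "(?bs ! ?m U, ?bs ! ?m V) \<in> rkba W ?bs"
        then obtain w1 where w1: "w1 \<in> ?bs ! ?m U" "\<forall>w2\<in>?bs ! ?m V. rk ?bs w1 < rk ?bs w2" unfolding rkba_def by blast
        obtain w2 where w2: "w2 \<in> ?bs ! ?m V" using neV by blast
        show "?m U < ?m V" using w1 w2 rkb[OF mU(1)] rkb[OF mV(1)] by force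
      next
        assume lt: "?m U < ?m V"
        have disj: "?bs ! ?m U \<inter> ?bs ! ?m V = {}" using bb_parts(2)[OF bb mU(1) mV(1)] lt by simp
        obtain w1 where w1: "w1 \<in> ?bs ! ?m U" using neU by blast
        have "\<forall>w2\<in>?bs ! ?m V. rk ?bs w1 < rk ?bs w2" using w1 rkb[OF mU(1)] rkb[OF mV(1)] lt by force
        then show "(?bs ! ?m U, ?bs ! ?m V) \<in> rkba W ?bs" unfolding rkba_def
          using sub[OF mU(1)] sub[OF mV(1)] disj w1 by blast
      qed
      show ?thesis using L R sU sV by simp
    qed
  qed
qed

theorem proposition3:
  fixes W :: "'a set" and op :: "'a balg \<Rightarrow> 'a balg \<Rightarrow> 'a balg"
    and G1 G2 :: "'a balg"
  assumes "finite W" and "W \<noteq> {}"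
    and "belief_algebra W G1" and "belief_algebra W G2"
    and "revision_operator W op"
  defines "Gs \<equiv> op (Com W G1) (Com W G2)"
  shows "op G1 G2 = Gen W ((G1 \<inter> Gs) \<union> G2) \<and>
         G1 \<inter> Gs = {(U, V). (U, V) \<in> G1 \<and> (support W Gs U, support W Gs V) \<in> Gs}"
proof -
  note fin = assms(1) and ba1 = assms(3) and ba2 = assms(4)
  note ro = assms(5)[unfolded revision_operator_def]
  have roBA: "\<And>G1 G2. belief_algebra W G1 \<Longrightarrow> belief_algebra W G2 \<Longrightarrow> belief_algebra W (op G1 G2)"
    using ro[THEN conjunct1] by blast
  have RA1: "\<And>G1 G2. belief_algebra W G1 \<Longrightarrow> belief_algebra W G2 \<Longrightarrow> G2 \<subseteq> op G1 G2"
    using ro[THEN conjunct2, THEN conjunct1] by blast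
  have RA2: "\<And>G1 G2. belief_algebra W G1 \<Longrightarrow> belief_algebra W G2 \<Longrightarrow> \<exists>\<Omega>. \<Omega> \<subseteq> G1 \<union> G2 \<and> op G1 G2 = Gen W \<Omega>"
    using ro[THEN conjunct2, THEN conjunct2, THEN conjunct1] by blast
  have RA3: "\<And>G1 G2. is_cba W G1 \<Longrightarrow> is_cba W G2 \<Longrightarrow> is_cba W (op G1 G2)"
    using ro[THEN conjunct2, THEN conjunct2, THEN conjunct2, THEN conjunct1] by blast
  have RA5: "\<And>G1 G2 G1' G2'. belief_algebra W G1 \<Longrightarrow> belief_algebra W G2 \<Longrightarrow>
       belief_algebra W G1' \<Longrightarrow> belief_algebra W G2' \<Longrightarrow>
       ba_le W G1 G1' \<Longrightarrow> ba_le W G2 G2' \<Longrightarrow> op G1 G2 \<subseteq> op G1' G2'"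
    using ro[THEN conjunct2, THEN conjunct2, THEN conjunct2, THEN conjunct2, THEN conjunct2, THEN conjunct1] by blast
  have RA6: "\<And>G1 G2 \<Omega>. belief_algebra W G1 \<Longrightarrow> belief_algebra W G2 \<Longrightarrow> \<Omega> \<subseteq> G1 \<union> G2 \<Longrightarrow>
       Gen W \<Omega> \<subseteq> op (Com W G1) (Com W G2) \<Longrightarrow> op G1 G2 \<subseteq> Gen W \<Omega> \<Longrightarrow> op G1 G2 = Gen W \<Omega>"
    using ro[THEN conjunct2, THEN conjunct2, THEN conjunct2, THEN conjunct2, THEN conjunct2, THEN conjunct2] by blast
  have bC1: "belief_algebra W (Com W G1)" by (rule is_cba_ba[OF Com_cba])
  have bC2: "belief_algebra W (Com W G2)" by (rule is_cba_ba[OF Com_cba])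
  have le1: "ba_le W G1 (Com W G1)" unfolding ba_le_def
    using backbone_Com[OF ba1 fin] G_sub_Com[OF ba1 fin] by simp
  have le2: "ba_le W G2 (Com W G2)" unfolding ba_le_def
    using backbone_Com[OF ba2 fin] G_sub_Com[OF ba2 fin] by simp
  have sub: "op G1 G2 \<subseteq> Gs" unfolding Gs_def by (rule RA5[OF ba1 ba2 bC1 bC2 le1 le2])
  have baGs: "belief_algebra W Gs" unfolding Gs_def by (rule roBA[OF bC1 bC2])
  have cbaGs: "is_cba W Gs" unfolding Gs_def by (rule RA3[OF Com_cba Com_cba])
  obtain \<Omega> where Om: "\<Omega> \<subseteq> G1 \<union> G2" and opeq: "op G1 G2 = Gen W \<Omega>" using RA2[OF ba1 ba2] by blast
  have G12RW: "G1 \<union> G2 \<subseteq> RW W" using ba_parts(1)[OF ba1] ba_parts(1)[OF ba2] by blast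
  have "\<Omega> \<subseteq> op G1 G2" unfolding opeq by (rule Gen_base_sub) (use Om G12RW in blast)
  then have "\<Omega> \<subseteq> (G1 \<inter> Gs) \<union> G2" using Om sub by blast
  then have s1: "op G1 G2 \<subseteq> Gen W ((G1 \<inter> Gs) \<union> G2)" unfolding opeq by (rule Gen_mono)
  have G2s: "G2 \<subseteq> Gs" using RA1[OF ba1 ba2] sub by blast
  have s2: "Gen W ((G1 \<inter> Gs) \<union> G2) \<subseteq> Gs" by (rule Gen_sub[OF baGs]) (use G2s in blast)
  have part1: "op G1 G2 = Gen W ((G1 \<inter> Gs) \<union> G2)"
    using RA6[OF ba1 ba2 _ s2[unfolded Gs_def] s1[unfolded Gs_def]] unfolding Gs_def by blast
  have Gseq: "Gs = rkba W (backbone W Gs)" by (rule cba_rkba[OF cbaGs fin])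
  have bbGs: "is_backbone W Gs (backbone W Gs)" by (rule backbone_ok[OF baGs fin])
  have part2: "G1 \<inter> Gs = {(U, V). (U, V) \<in> G1 \<and> (support W Gs U, support W Gs V) \<in> Gs}"
  proof (intro set_eqI)
    fix p :: "'a set \<times> 'a set"
    obtain U V where pu: "p = (U,V)" by (cases p)
    have "(U,V) \<in> G1 \<Longrightarrow> ((U,V) \<in> Gs \<longleftrightarrow> (support W Gs U, support W Gs V) \<in> Gs)"
    proof -
      assume "(U,V) \<in> G1"
      then have r: "U \<subseteq> W" "V \<subseteq> W" "U \<inter> V = {}" using ba_RW[OF ba1] by auto
      show ?thesis using rkba_support[OF bbGs r] Gseq by simp
    qed
    then show "p \<in> G1 \<inter> Gs \<longleftrightarrow> p \<in> {(U, V). (U, V) \<in> G1 \<and> (support W Gs U, support W Gs V) \<in> Gs}"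
      using pu by auto
  qed
  show ?thesis using part1 part2 by blast
qed


end
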